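(* Let $G$ be a (claw, bull)-free graph, let $C$ be an induced cycle of $G$ of length $k\ge 4$, and let $x\in N(C)$. Then $N(x)$ contains two consecutive vertices of $C$. Moreover, if $k\ge 5$, then $N(x)$ contains three consecutive vertices of $C$.
   Context: A claw is a graph isomorphic to $K_{1,3}$; a bull is the graph obtained from a triangle by adding two pendant edges at two different vertices. A graph is (claw, bull)-free if it has no induced claw and no induced bull. For a set $X$ of vertices, $N(X)=\big(\bigcup_{x\in X}N(x)\big)\setminus X$ is its open neighborhood; $N(C)$ means $N(V(C))$. *)

theory Defs
  imports Main
begin

definition simple_graph :: "'a set \<Rightarrow> ('a \<Rightarrow> 'a \<Rightarrow> bool) \<Rightarrow> bool" where
  "simple_graph V E \<longleftrightarrow> finite V \<and> (\<forall>u v. E u v \<longrightarrow> u \<in> V \<and> v \<in> V)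
     \<and> (\<forall>u v. E u v \<longrightarrow> E v u) \<and> (\<forall>u. \<not> E u u)"

definition has_induced_claw :: "'a set \<Rightarrow> ('a \<Rightarrow> 'a \<Rightarrow> bool) \<Rightarrow> bool" where
  "has_induced_claw V E \<longleftrightarrow> (\<exists>a\<in>V. \<exists>b\<in>V. \<exists>c\<in>V. \<exists>d\<in>V.
     distinct [a, b, c, d] \<and> E a b \<and> E a c \<and> E a d
     \<and> \<not> E b c \<and> \<not> E b d \<and> \<not> E c d)"

definition has_induced_bull :: "'a set \<Rightarrow> ('a \<Rightarrow> 'a \<Rightarrow> bool) \<Rightarrow> bool" where
  "has_induced_bull V E \<longleftrightarrow> (\<exists>x\<in>V. \<exists>y\<in>V. \<exists>z\<in>V. \<exists>u\<in>V. \<exists>v\<in>V.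
     distinct [x, y, z, u, v] \<and> E x y \<and> E y z \<and> E x z \<and> E u x \<and> E v y
     \<and> \<not> E u y \<and> \<not> E u z \<and> \<not> E u v \<and> \<not> E v x \<and> \<not> E v z)"

definition claw_bull_free :: "'a set \<Rightarrow> ('a \<Rightarrow> 'a \<Rightarrow> bool) \<Rightarrow> bool" where
  "claw_bull_free V E \<longleftrightarrow> \<not> has_induced_claw V E \<and> \<not> has_induced_bull V E"

definition induced_cycle :: "'a set \<Rightarrow> ('a \<Rightarrow> 'a \<Rightarrow> bool) \<Rightarrow> (nat \<Rightarrow> 'a) \<Rightarrow> nat \<Rightarrow> bool" where
  "induced_cycle V E c k \<longleftrightarrow> k \<ge> 3 \<and> inj_on c {..<k} \<and> c ` {..<k} \<subseteq> V
     \<and> (\<forall>i<k. \<forall>j<k. E (c i) (c j) \<longleftrightarrow> (j = (i + 1) mod k \<or> i = (j + 1) mod k))"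

definition nbhd :: "('a \<Rightarrow> 'a \<Rightarrow> bool) \<Rightarrow> 'a set \<Rightarrow> 'a set" where
  "nbhd E X = {y. \<exists>x\<in>X. E x y} - X"

end

theory Submission
  imports Defs
begin

lemma modk: "(j::nat) = a + k \<Longrightarrow> a < k \<Longrightarrow> j mod k = a"
proof -
  assume "j = a + k" "a < k"
  then have "j mod k = (a + k) mod k" by simp
  also have "\<dots> = a mod k" by (rule mod_add_self2)
  also have "\<dots> = a" using \<open>a < k\<close> by simp
  finally show ?thesis .
qed

lemma m1: "(i::nat) < k \<Longrightarrow> (i+1) mod k = (if i+1=k then 0 else i+1)"
  by auto
lemma m2: "(i::nat) < k \<Longrightarrow> k \<ge> 3 \<Longrightarrow> (i+2) mod k = (if i+2=k then 0 else if i+1=k then 1 else i+2)"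
proof -
  assume a: "i < k" "k \<ge> 3"
  show ?thesis
  proof (cases "i+2 < k")
    case True then show ?thesis by auto
  next
    case False
    then have "i+2 = k \<or> i+1 = k" using a by auto
    then show ?thesis
    proof
      assume "i+2=k" then show ?thesis by auto
    next
      assume h: "i+1=k"
      have "(i+2) mod k = 1" by (rule modk) (use h a in auto)
      then show ?thesis using h a by auto
    qed
  qed
qed
lemma m3: "(i::nat) < k \<Longrightarrow> k \<ge> 4 \<Longrightarrow> (i+3) mod k = (if i+3=k then 0 else if i+2=k then 1 else if i+1=k then 2 else i+3)"
proof -
  assume a: "i < k" "k \<ge> 4"
  show ?thesis
  proof (cases "i+3 < k")
    case True then show ?thesis by auto
  next
    case False
    then have "i+3 = k \<or> i+2 = k \<or> i+1 = k" using a by auto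
    moreover have "i+2 = k \<Longrightarrow> (i+3) mod k = 1"
      by (rule modk) (use a in auto)
    moreover have "i+1 = k \<Longrightarrow> (i+3) mod k = 2"
      by (rule modk) (use a in auto)
    ultimately show ?thesis by auto
  qed
qed
lemma mm: "(i::nat) < k \<Longrightarrow> (i+k-1) mod k = (if i=0 then k-1 else i-1)"
proof -
  assume a: "i<k"
  show ?thesis
  proof (cases "i=0")
    case True then show ?thesis using a by simp
  next
    case False
    have "(i+k-1) mod k = i - 1" by (rule modk) (use False a in auto)
    then show ?thesis using False by simp
  qed
qed

lemma idx4:
  assumes "(i::nat) < k" "k \<ge> 4"
  shows "(i+k-1) mod k < k" "(i+1) mod k < k" "(i+2) mod k < k"
    "((i+k-1) mod k + 1) mod k = i"
    "((i+1) mod k + 1) mod k = (i+2) mod k"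
    "(i+1) mod k \<noteq> i" "(i+k-1) mod k \<noteq> i" "(i+k-1) mod k \<noteq> (i+1) mod k"
    "(i+k-1) mod k \<noteq> (i+2) mod k" "(i+2) mod k \<noteq> i" "(i+2) mod k \<noteq> (i+1) mod k"
    "((i+2) mod k + 1) mod k = (i+3) mod k" "i \<noteq> (i+3) mod k"
    "(i+1) mod k \<noteq> (i+k-1) mod k"
proof -
  have P: "(i+k-1) mod k = (if i=0 then k-1 else i-1)" using mm assms by blast
  have S: "(i+1) mod k = (if i+1=k then 0 else i+1)" using m1 assms by blast
  have T: "(i+2) mod k = (if i+2=k then 0 else if i+1=k then 1 else i+2)" using m2 assms by simp
  have U: "(i+3) mod k = (if i+3=k then 0 else if i+2=k then 1 else if i+1=k then 2 else i+3)" using m3 assms by simp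
  show "(i+k-1) mod k < k" "(i+1) mod k < k" "(i+2) mod k < k" using assms by auto
  have "((i+k-1) mod k + 1) mod k = (i+k-1+1) mod k" by (rule mod_add_left_eq)
  also have "\<dots> = i" by (rule modk) (use assms in auto)
  finally show "((i+k-1) mod k + 1) mod k = i" .
  have "((i+1) mod k + 1) mod k = (i+1+1) mod k" by (rule mod_add_left_eq)
  moreover have "i+1+1 = i+2" by simp
  ultimately show "((i+1) mod k + 1) mod k = (i+2) mod k" by metis
  have "((i+2) mod k + 1) mod k = (i+2+1) mod k" by (rule mod_add_left_eq)
  moreover have "i+2+1 = i+3" by simp
  ultimately show "((i+2) mod k + 1) mod k = (i+3) mod k" by metis
  show "(i+1) mod k \<noteq> i" "(i+k-1) mod k \<noteq> i" "(i+k-1) mod k \<noteq> (i+1) mod k"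
    "(i+k-1) mod k \<noteq> (i+2) mod k" "(i+2) mod k \<noteq> i" "(i+2) mod k \<noteq> (i+1) mod k"
    "i \<noteq> (i+3) mod k" "(i+1) mod k \<noteq> (i+k-1) mod k"
    unfolding P S T U using assms by auto
qed

lemma idx5:
  assumes "(i::nat) < k" "k \<ge> 5"
  shows "(i+k-1) mod k \<noteq> (i+3) mod k"
proof -
  have P: "(i+k-1) mod k = (if i=0 then k-1 else i-1)" using mm assms by blast
  have U: "(i+3) mod k = (if i+3=k then 0 else if i+2=k then 1 else if i+1=k then 2 else i+3)" using m3 assms by simp
  show ?thesis unfolding P U using assms by auto
qed

theorem lemma2:
  fixes V :: "'a set" and E :: "'a \<Rightarrow> 'a \<Rightarrow> bool" and c :: "nat \<Rightarrow> 'a" and k :: nat and x :: 'a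
  assumes "simple_graph V E"
    and "claw_bull_free V E"
    and "induced_cycle V E c k"
    and "k \<ge> 4"
    and "x \<in> nbhd E (c ` {..<k})"
  shows "(\<exists>i<k. E x (c i) \<and> E x (c ((i + 1) mod k)))
    \<and> (k \<ge> 5 \<longrightarrow> (\<exists>i<k. E x (c i) \<and> E x (c ((i + 1) mod k)) \<and> E x (c ((i + 2) mod k))))"
proof -
  have sym: "\<And>u v. E u v \<Longrightarrow> E v u" and inV: "\<And>u v. E u v \<Longrightarrow> u \<in> V \<and> v \<in> V"
    using assms(1) unfolding simple_graph_def by blast+
  have inj: "inj_on c {..<k}" and cV: "c ` {..<k} \<subseteq> V"
    and A: "\<And>i j. i<k \<Longrightarrow> j<k \<Longrightarrow> E (c i) (c j) \<longleftrightarrow> (j = (i + 1) mod k \<or> i = (j + 1) mod k)"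
    using assms(3) unfolding induced_cycle_def by blast+
  have cinV: "\<And>i. i<k \<Longrightarrow> c i \<in> V" using cV by blast
  have cne: "\<And>i j. i<k \<Longrightarrow> j<k \<Longrightarrow> i \<noteq> j \<Longrightarrow> c i \<noteq> c j" using inj by (meson inj_on_contraD lessThan_iff)
  obtain i0 where i0: "i0 < k" "E (c i0) x" and xnot: "x \<notin> c ` {..<k}"
    using assms(5) unfolding nbhd_def by blast
  have xV: "x \<in> V" using inV i0(2) by blast
  have xne: "\<And>i. i<k \<Longrightarrow> x \<noteq> c i" using xnot by blast
  have noclaw: "\<not> has_induced_claw V E" and nobull: "\<not> has_induced_bull V E"
    using assms(2) unfolding claw_bull_free_def by blast+
  have k4: "k \<ge> 4" by fact
  have step1: "E x (c ((i+k-1) mod k)) \<or> E x (c ((i+1) mod k))" if i: "i<k" "E x (c i)" for i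
  proof (rule ccontr)
    assume h: "\<not> (E x (c ((i+k-1) mod k)) \<or> E x (c ((i+1) mod k)))"
    define p where "p = (i+k-1) mod k"
    define s where "s = (i+1) mod k"
    note I = idx4[OF i(1) k4, folded p_def s_def]
    have "E (c i) (c p)" using A[of i p] I i(1) by simp
    moreover have "E (c i) (c s)" using A[of i s] I i(1) s_def by simp
    moreover have "\<not> E (c p) (c s)" using A[of p s] I i(1) by auto
    moreover have "distinct [c i, x, c p, c s]" using cne[of i p] cne[of i s] cne[of p s] xne[of i] xne[of p] xne[of s] I i(1) by auto
    moreover have "E (c i) x" using sym i(2) by blast
    ultimately have "has_induced_claw V E" unfolding has_induced_claw_def
      using h p_def s_def cinV[of i] cinV[of p] cinV[of s] xV I i(1) sym by blast
    then show False using noclaw by blast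
  qed
  have part1: "\<exists>i<k. E x (c i) \<and> E x (c ((i + 1) mod k))"
  proof -
    have e0: "E x (c i0)" using sym i0 by blast
    note I = idx4[OF i0(1) k4]
    show ?thesis
    proof (cases "E x (c ((i0+1) mod k))")
      case True then show ?thesis using e0 i0 by blast
    next
      case False
      then have "E x (c ((i0+k-1) mod k))" using step1[OF i0(1) e0] by blast
      then show ?thesis using e0 I by metis
    qed
  qed
  have part2: "\<exists>i<k. E x (c i) \<and> E x (c ((i + 1) mod k)) \<and> E x (c ((i + 2) mod k))" if k5: "k \<ge> 5"
  proof -
    obtain j where j: "j<k" "E x (c j)" "E x (c ((j + 1) mod k))" using part1 by blast
    define p where "p = (j+k-1) mod k"
    define s where "s = (j+1) mod k"
    define t where "t = (j+2) mod k"
    note I = idx4[OF j(1) k4, folded p_def s_def t_def]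
    note I5 = idx5[OF j(1) k5, folded p_def]
    have "E x (c p) \<or> E x (c t)"
    proof (rule ccontr)
      assume h: "\<not> (E x (c p) \<or> E x (c t))"
      have "E (c j) (c s)" using A[of j s] I j(1) s_def by simp
      moreover have "E (c p) (c j)" using A[of p j] I j(1) by simp
      moreover have "E (c t) (c s)" using A[of t s] I(2) I(3) I(5) by metis
      moreover have "\<not> E (c p) (c s)" using A[of p s] I j(1) by auto
      moreover have "\<not> E (c p) (c t)" using A[of p t] I I5 j(1) by auto
      moreover have "\<not> E (c t) (c j)" using A[of t j] I(3) I(11) I(12) I(13) j(1) s_def by metis
      moreover have "distinct [c j, c s, x, c p, c t]"
        using cne[of j p] cne[of j s] cne[of p s] cne[of j t] cne[of s t] cne[of p t]
          xne[of j] xne[of p] xne[of s] xne[of t] I j(1) by auto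
      moreover have "E (c s) x" "E (c j) x" using sym j s_def by blast+
      ultimately have "has_induced_bull V E" unfolding has_induced_bull_def
        using h cinV[of j] cinV[of p] cinV[of s] cinV[of t] xV I j(1) sym by blast
      then show False using nobull by blast
    qed
    then show ?thesis
    proof
      assume "E x (c t)" then show ?thesis using j s_def t_def by blast
    next
      assume hp: "E x (c p)"
      have pk: "p < k" using I by simp
      note J = idx4[OF pk k4]
      have "(p+1) mod k = j" using I by simp
      moreover have "(p+2) mod k = s" using J(5) \<open>(p+1) mod k = j\<close> s_def by simp
      ultimately show ?thesis using hp j pk s_def by metis
    qed
  qed
  show ?thesis using part1 part2 by blast
qed

end
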